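(* Fix $\theta\in(0,\pi/2)$, let $\lambda=\left(\frac{\sqrt d}{2\log d}\right)^d$ and $\Delta=s_d(\theta)\lambda$, and let $\mathbf X$ be a Poisson point process of intensity $\lambda$ on $S^{d-1}$ with respect to normalised surface measure. If $d$ is sufficiently large, then \[ \mathbb{E}\left|\left\{x\in\mathbf X:|\mathbf X\cap C_x(\theta)|\geq\Delta\big(1+\Delta^{-1/3}\big)\right\}\right|\leq(2d)^{-1}\,\mathbb{E}|\mathbf X|. \]
   Context: $S^{d-1}$ is the unit sphere in $\mathbb{R}^d$ with surface measure normalised to total mass $1$; $C_x(\theta)=\{y\in S^{d-1}:\langle x,y\rangle\geq\cos\theta\}$ and $s_d(\theta)$ is its normalised measure. $\log$ is the natural logarithm. *)

theory Defs
  imports "HOL-Analysis.Analysis"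
begin

text \<open>Euclidean space R^d, realised as extensional functions on the index set {..<d}
  with the product Lebesgue measure (so that the dimension d can be quantified over).\<close>

definition eucl :: "nat \<Rightarrow> (nat \<Rightarrow> real) measure" where
  "eucl d = (\<Pi>\<^sub>M i\<in>{..<d}. lborel)"

definition enorm :: "nat \<Rightarrow> (nat \<Rightarrow> real) \<Rightarrow> real" where
  "enorm d x = sqrt (\<Sum>i<d. (x i)\<^sup>2)"

definition einner :: "nat \<Rightarrow> (nat \<Rightarrow> real) \<Rightarrow> (nat \<Rightarrow> real) \<Rightarrow> real" where
  "einner d x y = (\<Sum>i<d. x i * y i)"

definition usphere :: "nat \<Rightarrow> (nat \<Rightarrow> real) set" where
  "usphere d = {x \<in> space (eucl d). enorm d x = 1}"

text \<open>Normalised surface measure on S^{d-1} (total mass 1): the image of the uniform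
  probability measure on the punctured open unit ball under radial projection
  x \<mapsto> x/|x| (the cone-measure description of normalised surface measure).\<close>
definition sphere_measure :: "nat \<Rightarrow> (nat \<Rightarrow> real) measure" where
  "sphere_measure d =
     distr (uniform_measure (eucl d) {x \<in> space (eucl d). 0 < enorm d x \<and> enorm d x < 1})
           (eucl d) (\<lambda>x. restrict (\<lambda>i. x i / enorm d x) {..<d})"

definition cap :: "nat \<Rightarrow> (nat \<Rightarrow> real) \<Rightarrow> real \<Rightarrow> (nat \<Rightarrow> real) set" where
  "cap d x \<theta> = {y \<in> usphere d. einner d x y \<ge> cos \<theta>}"

text \<open>s_d(theta): normalised measure of a cap (centred at the first basis vector;
  by rotation invariance this is independent of the centre).\<close>
definition sd :: "nat \<Rightarrow> real \<Rightarrow> real" where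
  "sd d \<theta> = measure (sphere_measure d)
      (cap d (restrict (\<lambda>i. if i = 0 then 1 else 0) {..<d}) \<theta>)"

text \<open>Expectation of a nonnegative functional F of a Poisson point process of intensity
  lam (w.r.t. normalised surface measure, of total mass 1) on S^{d-1}. We use the standard
  construction: the number of points N is Poisson(lam), and given N = n the points
  xs 0, ..., xs (n-1) are i.i.d. with law sphere_measure d. F n xs evaluates the functional
  on the configuration {xs 0, ..., xs (n-1)} (as a multiset).\<close>
definition ppp_expect ::
    "nat \<Rightarrow> real \<Rightarrow> (nat \<Rightarrow> (nat \<Rightarrow> nat \<Rightarrow> real) \<Rightarrow> ennreal) \<Rightarrow> ennreal" where
  "ppp_expect d lam F =
     (\<Sum>n. ennreal (lam ^ n / fact n * exp (- lam)) *
           (\<integral>\<^sup>+ xs. F n xs \<partial>(\<Pi>\<^sub>M k\<in>{..<n}. sphere_measure d)))"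

definition cap_count :: "nat \<Rightarrow> real \<Rightarrow> nat \<Rightarrow> (nat \<Rightarrow> nat \<Rightarrow> real) \<Rightarrow> nat \<Rightarrow> nat" where
  "cap_count d \<theta> n xs j = card {k \<in> {..<n}. xs k \<in> cap d (xs j) \<theta>}"

end

theory Submission
  imports Defs "HOL-Probability.Probability" "HOL-Real_Asymp.Real_Asymp"
begin


lemma space_eucl: "space (eucl d) = PiE {..<d} (\<lambda>_. UNIV)"
  by (simp add: eucl_def space_PiM)

lemma psf_lborel: "product_sigma_finite (\<lambda>_::nat. lborel :: real measure)"
  by (simp add: product_sigma_finite_def lborel.sigma_finite_measure_axioms)

lemma upd_in_space: "z \<in> space (eucl d) \<Longrightarrow> i < d \<Longrightarrow> z(i := v) \<in> space (eucl d)"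
  by (auto simp: space_eucl PiE_def extensional_def)

lemma coord_affine:
  assumes i: "i < d" and c: "c \<noteq> 0" and b[measurable]: "b \<in> borel_measurable (eucl d)"
    and binv: "\<And>z v. z \<in> space (eucl d) \<Longrightarrow> b (z(i:=v)) = b z"
    and A[measurable]: "A \<in> sets (eucl d)"
  shows "emeasure (eucl d) {z \<in> space (eucl d). z(i := c * z i + b z) \<in> A} * ennreal \<bar>c\<bar>
         = emeasure (eucl d) A"
proof -
  interpret P: product_sigma_finite "\<lambda>_::nat. lborel :: real measure" by (rule psf_lborel)
  define I' where "I' = {..<d} - {i}"
  have dI: "{..<d} = insert i I'" and iI: "i \<notin> I'" and fI: "finite I'" using i by (auto simp: I'_def)
  define \<phi> where "\<phi> z = z(i := c * z i + b z)" for z :: "nat \<Rightarrow> real"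
  have \<phi>m[measurable]: "\<phi> \<in> eucl d \<rightarrow>\<^sub>M eucl d"
    unfolding eucl_def
    apply (rule measurable_PiM_single')
    subgoal for k using b i unfolding \<phi>_def eucl_def by (cases "k = i") (simp_all, measurable)
    using i by (auto simp: \<phi>_def space_PiM PiE_def extensional_def)
  have pre: "{z \<in> space (eucl d). z(i := c * z i + b z) \<in> A} = \<phi> -` A \<inter> space (eucl d)"
    by (auto simp: \<phi>_def)
  have prem[measurable]: "\<phi> -` A \<inter> space (eucl d) \<in> sets (eucl d)" by measurable
  have "emeasure (eucl d) (\<phi> -` A \<inter> space (eucl d)) * ennreal \<bar>c\<bar>
      = (\<integral>\<^sup>+z. indicator (\<phi> -` A \<inter> space (eucl d)) z * ennreal \<bar>c\<bar> \<partial>eucl d)"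
    by (subst nn_integral_multc) (auto simp: nn_integral_indicator)
  also have "\<dots> = (\<integral>\<^sup>+y. (\<integral>\<^sup>+v. indicator (\<phi> -` A \<inter> space (eucl d)) (y(i:=v)) * ennreal \<bar>c\<bar> \<partial>lborel) \<partial>(\<Pi>\<^sub>M k\<in>I'. lborel))"
    unfolding eucl_def dI
    by (rule P.product_nn_integral_insert[OF fI iI]) (simp add: dI[symmetric] eucl_def[symmetric])
  also have "\<dots> = (\<integral>\<^sup>+y. (\<integral>\<^sup>+w. indicator A (y(i:=w)) \<partial>lborel) \<partial>(\<Pi>\<^sub>M k\<in>I'. lborel))"
  proof (rule nn_integral_cong)
    fix y assume y: "y \<in> space (\<Pi>\<^sub>M k\<in>I'. (lborel::real measure))"
    have yE: "y \<in> space (eucl d)" using y dI by (auto simp: space_eucl space_PiM PiE_def extensional_def)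
    have yv: "\<And>v. y(i:=v) \<in> space (eucl d)" using upd_in_space[OF yE i] .
    have ym: "(\<lambda>w. y(i := w)) \<in> lborel \<rightarrow>\<^sub>M eucl d"
      using measurable_component_update[OF y iI] unfolding eucl_def dI by simp
    have "(\<integral>\<^sup>+v. indicator (\<phi> -` A \<inter> space (eucl d)) (y(i:=v)) * ennreal \<bar>c\<bar> \<partial>lborel)
        = (\<integral>\<^sup>+v. indicator A (y(i:= b y + c * v)) \<partial>lborel) * ennreal \<bar>c\<bar>"
    proof -
      have "\<And>v. indicator (\<phi> -` A \<inter> space (eucl d)) (y(i:=v)) = (indicator A (y(i:= b y + c * v)) :: ennreal)"
        using yv binv[OF yE] by (auto simp: \<phi>_def indicator_def algebra_simps)
      moreover have "(\<lambda>v. indicator A (y(i:= b y + c * v)) :: ennreal) \<in> borel_measurable lborel"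
      proof -
        have "(\<lambda>v. b y + c * v) \<in> lborel \<rightarrow>\<^sub>M lborel" by simp
        from measurable_comp[OF this ym] have "(\<lambda>v. y(i:= b y + c * v)) \<in> lborel \<rightarrow>\<^sub>M eucl d"
          by (simp add: comp_def)
        then show ?thesis by measurable
      qed
      ultimately show ?thesis by (simp add: nn_integral_multc)
    qed
    also have "\<dots> = (\<integral>\<^sup>+w. indicator A (y(i:=w)) \<partial>lborel)"
    proof -
      have [measurable]: "(\<lambda>w. indicator A (y(i:=w)) :: ennreal) \<in> borel_measurable borel"
        using ym by measurable
      show ?thesis
        using nn_integral_real_affine[of "\<lambda>w. indicator A (y(i:=w)) :: ennreal" c "b y", OF _ c]
        by (simp add: mult.commute)
    qed
    finally show "(\<integral>\<^sup>+v. indicator (\<phi> -` A \<inter> space (eucl d)) (y(i:=v)) * ennreal \<bar>c\<bar> \<partial>lborel)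
        = (\<integral>\<^sup>+w. indicator A (y(i:=w)) \<partial>lborel)" .
  qed
  also have "\<dots> = emeasure (eucl d) A"
    unfolding nn_integral_indicator[OF A, symmetric] unfolding eucl_def dI
    by (rule P.product_nn_integral_insert[OF fI iI, symmetric]) (simp add: dI[symmetric] eucl_def[symmetric])
  finally show ?thesis unfolding pre .
qed



definition mp :: "nat \<Rightarrow> ((nat \<Rightarrow> real) \<Rightarrow> (nat \<Rightarrow> real)) \<Rightarrow> bool" where
  "mp d T \<longleftrightarrow> T \<in> eucl d \<rightarrow>\<^sub>M eucl d \<and>
     (\<forall>A\<in>sets (eucl d). emeasure (eucl d) (T -` A \<inter> space (eucl d)) = emeasure (eucl d) A)"

lemma mp_comp: "mp d T \<Longrightarrow> mp d S \<Longrightarrow> mp d (S \<circ> T)"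
proof -
  assume T: "mp d T" and S: "mp d S"
  have Tm: "T \<in> eucl d \<rightarrow>\<^sub>M eucl d" and Sm: "S \<in> eucl d \<rightarrow>\<^sub>M eucl d" using T S by (auto simp: mp_def)
  show ?thesis unfolding mp_def
  proof (intro conjI ballI)
    show "S \<circ> T \<in> eucl d \<rightarrow>\<^sub>M eucl d" using Tm Sm by (rule measurable_comp)
  next
    fix A assume A: "A \<in> sets (eucl d)"
    have SA: "S -` A \<inter> space (eucl d) \<in> sets (eucl d)" using Sm A by (rule measurable_sets)
    have eq: "(S \<circ> T) -` A \<inter> space (eucl d) = T -` (S -` A \<inter> space (eucl d)) \<inter> space (eucl d)"
      using measurable_space[OF Tm] by auto
    have "emeasure (eucl d) ((S \<circ> T) -` A \<inter> space (eucl d)) = emeasure (eucl d) (S -` A \<inter> space (eucl d))"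
      unfolding eq using T SA unfolding mp_def by blast
    also have "\<dots> = emeasure (eucl d) A" using S A unfolding mp_def by blast
    finally show "emeasure (eucl d) ((S \<circ> T) -` A \<inter> space (eucl d)) = emeasure (eucl d) A" .
  qed
qed

lemma mp_cong: "mp d T \<Longrightarrow> (\<And>z. z \<in> space (eucl d) \<Longrightarrow> T z = T' z) \<Longrightarrow> mp d T'"
proof -
  assume T: "mp d T" and eq: "\<And>z. z \<in> space (eucl d) \<Longrightarrow> T z = T' z"
  have "T' \<in> eucl d \<rightarrow>\<^sub>M eucl d" using T eq measurable_cong[of "eucl d" T T'] by (auto simp: mp_def)
  moreover have "\<And>A. T' -` A \<inter> space (eucl d) = T -` A \<inter> space (eucl d)" using eq by auto
  ultimately show ?thesis using T by (simp add: mp_def)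
qed

definition sh :: "nat \<Rightarrow> nat \<Rightarrow> real \<Rightarrow> (nat \<Rightarrow> real) \<Rightarrow> (nat \<Rightarrow> real)" where
  "sh i j a z = z(i := z i + a * z j)"

lemma upd_measurable:
  assumes i: "i < d" and f[measurable]: "f \<in> borel_measurable (eucl d)"
  shows "(\<lambda>z. z(i := f z)) \<in> eucl d \<rightarrow>\<^sub>M eucl d"
  unfolding eucl_def
  apply (rule measurable_PiM_single')
  subgoal for k using f i unfolding eucl_def by (cases "k = i") (simp_all, measurable)
  using i by (auto simp: space_PiM PiE_def extensional_def)

lemma comp_measurable_eucl: "k < d \<Longrightarrow> (\<lambda>z. z k) \<in> borel_measurable (eucl d)"
  unfolding eucl_def by measurable

lemma mp_sh: assumes "i < d" "j < d" "i \<noteq> j" shows "mp d (sh i j a)"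
proof -
  have m: "sh i j a \<in> eucl d \<rightarrow>\<^sub>M eucl d"
  proof -
    have "i < d \<Longrightarrow> j < d \<Longrightarrow> (\<lambda>z. z i + a * z j) \<in> borel_measurable (eucl d)" unfolding eucl_def by measurable
    note this[OF assms(1,2)]
    then show ?thesis unfolding sh_def using assms by (intro upd_measurable) auto
  qed
  show ?thesis unfolding mp_def
  proof (intro conjI ballI m)
    fix A assume A: "A \<in> sets (eucl d)"
    have "emeasure (eucl d) {z \<in> space (eucl d). z(i := 1 * z i + a * z j) \<in> A} * ennreal \<bar>1\<bar>
         = emeasure (eucl d) A"
    proof (rule coord_affine)
      show "(\<lambda>z. a * z j) \<in> borel_measurable (eucl d)"
        using assms(2) by (intro borel_measurable_times borel_measurable_const comp_measurable_eucl)
    qed (use assms A in auto)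
    moreover have "{z \<in> space (eucl d). z(i := 1 * z i + a * z j) \<in> A} = sh i j a -` A \<inter> space (eucl d)"
      by (auto simp: sh_def)
    ultimately show "emeasure (eucl d) (sh i j a -` A \<inter> space (eucl d)) = emeasure (eucl d) A" by simp
  qed
qed

definition rot :: "nat \<Rightarrow> nat \<Rightarrow> real \<Rightarrow> real \<Rightarrow> (nat \<Rightarrow> real) \<Rightarrow> (nat \<Rightarrow> real)" where
  "rot i j c s z = z(i := c * z i - s * z j, j := s * z i + c * z j)"

lemma mp_rot0:
  assumes "i < d" "j < d" "i \<noteq> j" "c\<^sup>2 + s\<^sup>2 = 1" "c \<noteq> -1"
  shows "mp d (rot i j c s)"
proof -
  define t where "t = s / (1 + c)"
  have c1: "1 + c \<noteq> 0" using assms(5) by linarith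
  have st: "s * t = 1 - c"
  proof -
    have "s * t = s\<^sup>2 / (1 + c)" by (simp add: t_def power2_eq_square)
    also have "\<dots> = (1 - c) * (1 + c) / (1 + c)" using assms(4) by (simp add: algebra_simps power2_eq_square)
    finally show ?thesis using c1 by simp
  qed
  have tc: "t * (1 + c) = s" using c1 by (simp add: t_def)
  have "mp d (sh i j (-t) \<circ> (sh j i s \<circ> sh i j (-t)))"
    using assms by (intro mp_comp mp_sh) auto
  moreover have "\<And>z. (sh i j (-t) \<circ> (sh j i s \<circ> sh i j (-t))) z = rot i j c s z"
  proof
    fix z x
    have e1: "z i - t * z j - t * (z j + s * (z i - t * z j)) = c * z i - s * z j"
    proof -
      have "z i - t * z j - t * (z j + s * (z i - t * z j)) = z i * (1 - s * t) - z j * t * (2 - s * t)"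
        by (simp add: algebra_simps)
      also have "\<dots> = c * z i - z j * (t * (1 + c))" unfolding st by (simp add: algebra_simps)
      also have "\<dots> = c * z i - s * z j" unfolding tc by simp
      finally show ?thesis .
    qed
    have e2: "z j + s * (z i - t * z j) = s * z i + c * z j"
    proof -
      have "z j + s * (z i - t * z j) = s * z i + (1 - s * t) * z j" by (simp add: algebra_simps)
      then show ?thesis unfolding st by simp
    qed
    show "(sh i j (-t) \<circ> (sh j i s \<circ> sh i j (-t))) z x = rot i j c s z x"
      using assms(3) e1 e2 by (simp add: sh_def rot_def)
  qed
  ultimately show ?thesis by (rule mp_cong)
qed

lemma mp_rot:
  assumes "i < d" "j < d" "i \<noteq> j" "c\<^sup>2 + s\<^sup>2 = 1"
  shows "mp d (rot i j c s)"
proof (cases "c = -1")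
  case False then show ?thesis using assms mp_rot0 by blast
next
  case True
  then have s: "s = 0" using assms(4) by simp
  have "mp d (rot i j 0 1 \<circ> rot i j 0 1)"
    using assms by (intro mp_comp mp_rot0) auto
  moreover have "\<And>z. (rot i j 0 1 \<circ> rot i j 0 1) z = rot i j c s z"
    using True s assms(3) by (auto simp: rot_def)
  ultimately show ?thesis by (rule mp_cong)
qed



definition Kset :: "nat \<Rightarrow> real \<Rightarrow> (nat \<Rightarrow> real) \<Rightarrow> (nat \<Rightarrow> real) set" where
  "Kset d \<theta> x = {z \<in> space (eucl d). 0 < enorm d z \<and> enorm d z < 1 \<and> cos \<theta> * enorm d z \<le> einner d x z}"

lemma enorm_measurable: "(\<lambda>z. enorm d z) \<in> borel_measurable (eucl d)"
  unfolding enorm_def eucl_def by measurable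

lemma einner_measurable: "(\<lambda>z. einner d x z) \<in> borel_measurable (eucl d)"
  unfolding einner_def eucl_def by measurable

lemma sets_le: assumes [measurable]: "f \<in> borel_measurable M" "g \<in> borel_measurable M"
  shows "{z \<in> space M. f z \<le> (g z::real)} \<in> sets M" by measurable
lemma sets_less: assumes [measurable]: "f \<in> borel_measurable M" "g \<in> borel_measurable M"
  shows "{z \<in> space M. f z < (g z::real)} \<in> sets M" by measurable

lemma Kset_sets[measurable]: "Kset d \<theta> x \<in> sets (eucl d)"
proof -
  have "Kset d \<theta> x = {z \<in> space (eucl d). 0 < enorm d z} \<inter> {z \<in> space (eucl d). enorm d z < 1}
     \<inter> {z \<in> space (eucl d). cos \<theta> * enorm d z \<le> einner d x z}"
    by (auto simp: Kset_def)
  also have "\<dots> \<in> sets (eucl d)"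
    by (intro sets.Int sets_le sets_less enorm_measurable einner_measurable borel_measurable_const
        borel_measurable_times)
  finally show ?thesis .
qed

lemma sum_two:
  fixes d :: nat
  assumes "i < d" "j < d" "i \<noteq> j"
  shows "(\<Sum>k<d. f k) = f i + f j + (\<Sum>k\<in>{..<d}-{i,j}. f k)"
proof -
  have "(\<Sum>k<d. f k) = f i + (\<Sum>k\<in>{..<d}-{i}. f k)" using assms by (subst sum.remove[of _ i]) auto
  also have "(\<Sum>k\<in>{..<d}-{i}. f k) = f j + (\<Sum>k\<in>{..<d}-{i}-{j}. f k)"
    using assms sum.remove[of "{..<d}-{i}" j f] by auto
  also have "{..<d}-{i}-{j} = {..<d}-{i,j}" by auto
  finally show ?thesis by (simp add: add.assoc)
qed

lemma rot_apply: "i \<noteq> j \<Longrightarrow> rot i j c s z i = c * z i - s * z j"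
  "rot i j c s z j = s * z i + c * z j" "k \<noteq> i \<Longrightarrow> k \<noteq> j \<Longrightarrow> rot i j c s z k = z k"
  by (auto simp: rot_def)

lemma enorm_rot:
  assumes "i < d" "j < d" "i \<noteq> j" "c\<^sup>2 + s\<^sup>2 = 1"
  shows "enorm d (rot i j c s z) = enorm d z"
proof -
  have "(\<Sum>k<d. (rot i j c s z k)\<^sup>2) = (\<Sum>k<d. (z k)\<^sup>2)"
  proof -
    have a: "(\<Sum>k\<in>{..<d}-{i,j}. (rot i j c s z k)\<^sup>2) = (\<Sum>k\<in>{..<d}-{i,j}. (z k)\<^sup>2)"
      by (intro sum.cong) (auto simp: rot_apply)
    have b: "(c * z i - s * z j)\<^sup>2 + (s * z i + c * z j)\<^sup>2 = (c\<^sup>2 + s\<^sup>2) * ((z i)\<^sup>2 + (z j)\<^sup>2)"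
      by (simp add: algebra_simps power2_eq_square)
    show ?thesis using a b assms
      by (simp add: sum_two[OF assms(1-3)] rot_apply)
  qed
  then show ?thesis by (simp add: enorm_def)
qed

lemma einner_rot:
  assumes "i < d" "j < d" "i \<noteq> j"
  shows "einner d x (rot i j c (-s) z) = einner d (rot i j c s x) z"
proof -
  have a: "(\<Sum>k\<in>{..<d}-{i,j}. x k * rot i j c (-s) z k) = (\<Sum>k\<in>{..<d}-{i,j}. rot i j c s x k * z k)"
    by (intro sum.cong) (auto simp: rot_apply)
  show ?thesis unfolding einner_def sum_two[OF assms] a using assms
    by (simp add: rot_apply algebra_simps)
qed

lemma rot_space: "i < d \<Longrightarrow> j < d \<Longrightarrow> z \<in> space (eucl d) \<Longrightarrow> rot i j c s z \<in> space (eucl d)"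
  by (auto simp: rot_def space_eucl PiE_def extensional_def)

lemma K_rot:
  assumes "i < d" "j < d" "i \<noteq> j" "c\<^sup>2 + s\<^sup>2 = 1"
  shows "emeasure (eucl d) (Kset d \<theta> (rot i j c s x)) = emeasure (eucl d) (Kset d \<theta> x)"
proof -
  have T: "mp d (rot i j c (-s))" using assms by (intro mp_rot) auto
  have "rot i j c (-s) -` Kset d \<theta> x \<inter> space (eucl d) = Kset d \<theta> (rot i j c s x)"
    using assms rot_space[OF assms(1,2)] enorm_rot[OF assms(1-3), of c "-s"] einner_rot[OF assms(1-3)]
    by (auto simp: Kset_def)
  then show ?thesis using T Kset_sets unfolding mp_def by metis
qed

definition e1 :: "nat \<Rightarrow> nat \<Rightarrow> real" where "e1 d = restrict (\<lambda>i. if i = 0 then 1 else 0) {..<d}"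

lemma usphere_rot:
  assumes "i < d" "j < d" "i \<noteq> j" "c\<^sup>2 + s\<^sup>2 = 1" "y \<in> usphere d"
  shows "rot i j c s y \<in> usphere d"
  using assms rot_space[OF assms(1,2)] enorm_rot[OF assms(1-4)] by (auto simp: usphere_def)

lemma givens:
  assumes d: "2 \<le> d" and x: "x \<in> usphere d" and m: "m \<le> d - 1"
  shows "\<exists>y\<in>usphere d. emeasure (eucl d) (Kset d \<theta> x) = emeasure (eucl d) (Kset d \<theta> y) \<and>
           (\<forall>k. 1 \<le> k \<and> k \<le> m \<longrightarrow> y k = 0) \<and> (1 \<le> m \<longrightarrow> 0 \<le> y 0)"
  using m
proof (induction m)
  case 0 then show ?case using x by auto
next
  case (Suc m)
  then obtain y where y: "y \<in> usphere d" "emeasure (eucl d) (Kset d \<theta> x) = emeasure (eucl d) (Kset d \<theta> y)"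
    "\<forall>k. 1 \<le> k \<and> k \<le> m \<longrightarrow> y k = 0" by auto
  define j where "j = Suc m"
  have j: "j < d" "0 < d" "0 \<noteq> j" using Suc.prems d by (auto simp: j_def)
  show ?case
  proof (cases "(y 0)\<^sup>2 + (y j)\<^sup>2 = 0")
    case True
    then have "y 0 = 0" "y j = 0" by (auto simp: add_nonneg_eq_0_iff)
    then show ?thesis using y by (intro bexI[OF _ y(1)]) (auto simp: j_def le_Suc_eq)
  next
    case False
    define r where "r = sqrt ((y 0)\<^sup>2 + (y j)\<^sup>2)"
    have pos: "0 < (y 0)\<^sup>2 + (y j)\<^sup>2" using False by (metis add_nonneg_nonneg zero_le_power2 order_le_less)
    have r: "0 < r" using pos unfolding r_def by simp
    have r2: "r\<^sup>2 = (y 0)\<^sup>2 + (y j)\<^sup>2" unfolding r_def by simp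
    define c where "c = y 0 / r"
    define s where "s = - y j / r"
    have cs: "c\<^sup>2 + s\<^sup>2 = 1"
    proof -
      have "c\<^sup>2 + s\<^sup>2 = ((y 0)\<^sup>2 + (y j)\<^sup>2) / r\<^sup>2" by (simp add: c_def s_def power_divide add_divide_distrib)
      also have "\<dots> = 1" using r by (simp add: r2[symmetric])
      finally show ?thesis .
    qed
    define y' where "y' = rot 0 j c s y"
    have y'0: "y' 0 = r"
    proof -
      have "y' 0 = ((y 0)\<^sup>2 + (y j)\<^sup>2) / r" using j
        by (simp add: y'_def rot_apply c_def s_def power2_eq_square add_divide_distrib diff_divide_distrib)
      also have "\<dots> = r * r / r" using r2 by (simp add: power2_eq_square)
      finally show ?thesis using r by simp
    qed
    have y'j: "y' j = 0" using j by (simp add: y'_def rot_apply c_def s_def algebra_simps)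
    have "y' \<in> usphere d" unfolding y'_def using j cs y(1) by (intro usphere_rot) auto
    moreover have "emeasure (eucl d) (Kset d \<theta> x) = emeasure (eucl d) (Kset d \<theta> y')"
      unfolding y(2) y'_def using j cs by (intro K_rot[symmetric]) auto
    moreover have "\<forall>k. 1 \<le> k \<and> k \<le> Suc m \<longrightarrow> y' k = 0"
      using y(3) y'j j by (auto simp: y'_def rot_apply le_Suc_eq j_def)
    ultimately show ?thesis using y'0 r by (intro bexI[of _ y']) auto
  qed
qed

lemma K_e1:
  assumes d: "2 \<le> d" and x: "x \<in> usphere d"
  shows "emeasure (eucl d) (Kset d \<theta> x) = emeasure (eucl d) (Kset d \<theta> (e1 d))"
proof -
  obtain y where y: "y \<in> usphere d" "emeasure (eucl d) (Kset d \<theta> x) = emeasure (eucl d) (Kset d \<theta> y)"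
    "\<forall>k. 1 \<le> k \<and> k \<le> d - 1 \<longrightarrow> y k = 0" "0 \<le> y 0"
    using givens[OF d x order.refl, of \<theta>] d by auto
  have sp: "y \<in> space (eucl d)" "enorm d y = 1" using y(1) by (auto simp: usphere_def)
  have "(\<Sum>k<d. (y k)\<^sup>2) = (y 0)\<^sup>2 + (\<Sum>k\<in>{..<d}-{0}. (y k)\<^sup>2)" using d by (subst sum.remove[of _ 0]) auto
  also have "(\<Sum>k\<in>{..<d}-{0}. (y k)\<^sup>2) = 0"
  proof (intro sum.neutral ballI)
    fix k assume "k \<in> {..<d}-{0}"
    then have "1 \<le> k \<and> k \<le> d - 1" by auto
    then show "(y k)\<^sup>2 = 0" using y(3) by simp
  qed
  finally have "(\<Sum>k<d. (y k)\<^sup>2) = (y 0)\<^sup>2" by simp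
  with sp(2) have "sqrt ((y 0)\<^sup>2) = 1" by (simp add: enorm_def)
  then have y0: "y 0 = 1" using y(4) by simp
  have "y = e1 d"
  proof
    fix k show "y k = e1 d k"
    proof (cases "k < d")
      case True
      then show ?thesis using y0 y(3)[rule_format, of k] by (cases "k = 0") (auto simp: e1_def)
    qed (use sp(1) in \<open>auto simp: e1_def space_eucl PiE_def extensional_def\<close>)
  qed
  then show ?thesis using y(2) by simp
qed



definition Bset :: "nat \<Rightarrow> (nat \<Rightarrow> real) set" where
  "Bset d = {z \<in> space (eucl d). 0 < enorm d z \<and> enorm d z < 1}"
definition B1 :: "nat \<Rightarrow> (nat \<Rightarrow> real) set" where
  "B1 d = {z \<in> space (eucl d). enorm d z < 1}"
definition proj :: "nat \<Rightarrow> (nat \<Rightarrow> real) \<Rightarrow> (nat \<Rightarrow> real)" where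
  "proj d z = restrict (\<lambda>i. z i / enorm d z) {..<d}"

lemma Bset_sets[measurable]: "Bset d \<in> sets (eucl d)"
proof -
  have "Bset d = {z \<in> space (eucl d). 0 < enorm d z} \<inter> {z \<in> space (eucl d). enorm d z < 1}"
    by (auto simp: Bset_def)
  also have "\<dots> \<in> sets (eucl d)"
    by (intro sets.Int sets_less enorm_measurable borel_measurable_const)
  finally show ?thesis .
qed

lemma B1_sets[measurable]: "B1 d \<in> sets (eucl d)"
  unfolding B1_def by (intro sets_less enorm_measurable borel_measurable_const)

lemma usphere_sets[measurable]: "usphere d \<in> sets (eucl d)"
proof -
  have "usphere d = {z \<in> space (eucl d). enorm d z \<le> 1} \<inter> {z \<in> space (eucl d). 1 \<le> enorm d z}"
    by (auto simp: usphere_def)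
  also have "\<dots> \<in> sets (eucl d)"
    by (intro sets.Int sets_le enorm_measurable borel_measurable_const)
  finally show ?thesis .
qed

lemma cap_sets[measurable]: "cap d x \<theta> \<in> sets (eucl d)"
proof -
  have "cap d x \<theta> = usphere d \<inter> {z \<in> space (eucl d). cos \<theta> \<le> einner d x z}"
    by (auto simp: cap_def usphere_def)
  also have "\<dots> \<in> sets (eucl d)"
    by (intro sets.Int sets_le einner_measurable borel_measurable_const usphere_sets)
  finally show ?thesis .
qed

lemma proj_measurable: "proj d \<in> eucl d \<rightarrow>\<^sub>M eucl d"
  unfolding eucl_def proj_def
  apply (rule measurable_PiM_single')
  subgoal for k
    using enorm_measurable[of d] comp_measurable_eucl[of k d]
    unfolding eucl_def by (auto intro!: borel_measurable_divide)
  by (auto simp: space_PiM PiE_def extensional_def)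

lemma enorm_proj: assumes "0 < enorm d z" shows "enorm d (proj d z) = 1"
proof -
  have "(\<Sum>i<d. (proj d z i)\<^sup>2) = (\<Sum>i<d. (z i)\<^sup>2) / (enorm d z)\<^sup>2"
    by (simp add: proj_def power_divide sum_divide_distrib)
  also have "(\<Sum>i<d. (z i)\<^sup>2) = (enorm d z)\<^sup>2"
    by (simp add: enorm_def sum_nonneg)
  finally show ?thesis using assms by (simp add: enorm_def)
qed

lemma einner_proj: "einner d x (proj d z) = einner d x z / enorm d z"
  by (simp add: einner_def proj_def sum_divide_distrib)

lemma proj_space: "proj d z \<in> space (eucl d)"
  by (simp add: proj_def space_eucl)

lemma sphere_eq: "sphere_measure d = distr (uniform_measure (eucl d) (Bset d)) (eucl d) (proj d)"
  unfolding sphere_measure_def Bset_def proj_def ..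

lemma emeasure_sphere:
  assumes A: "A \<in> sets (eucl d)"
  shows "emeasure (sphere_measure d) A = emeasure (eucl d) (Bset d \<inter> (proj d -` A \<inter> space (eucl d))) / emeasure (eucl d) (Bset d)"
proof -
  have "emeasure (sphere_measure d) A = emeasure (uniform_measure (eucl d) (Bset d)) (proj d -` A \<inter> space (eucl d))"
    unfolding sphere_eq
    using A proj_measurable by (subst emeasure_distr) auto
  also have "\<dots> = emeasure (eucl d) (Bset d \<inter> (proj d -` A \<inter> space (eucl d))) / emeasure (eucl d) (Bset d)"
    using A proj_measurable by (intro emeasure_uniform_measure) auto
  finally show ?thesis .
qed

lemma sets_sphere[simp, measurable_cong]: "sets (sphere_measure d) = sets (eucl d)"
  by (simp add: sphere_measure_def)
lemma space_sphere[simp]: "space (sphere_measure d) = space (eucl d)"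
  by (simp add: sphere_measure_def)

lemma cap_pre: "Bset d \<inter> (proj d -` cap d x \<theta> \<inter> space (eucl d)) = Kset d \<theta> x"
proof -
  have "z \<in> Bset d \<inter> (proj d -` cap d x \<theta> \<inter> space (eucl d)) \<longleftrightarrow> z \<in> Kset d \<theta> x" for z
  proof (cases "z \<in> space (eucl d) \<and> 0 < enorm d z")
    case True
    then show ?thesis
      by (auto simp: Bset_def Kset_def cap_def usphere_def enorm_proj proj_space einner_proj
          pos_le_divide_eq)
  qed (auto simp: Bset_def Kset_def)
  then show ?thesis by blast
qed

lemma emeasure_cap: "emeasure (sphere_measure d) (cap d x \<theta>) = emeasure (eucl d) (Kset d \<theta> x) / emeasure (eucl d) (Bset d)"
  using emeasure_sphere[OF cap_sets] cap_pre by simp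

interpretation PL: product_sigma_finite "\<lambda>_::nat. lborel :: real measure" by (rule psf_lborel)

lemma cube_meas: "emeasure (eucl d) (PiE {..<d} (\<lambda>_. {a..b})) = ennreal ((b - a) ^ d)" if "a \<le> b"
  using that unfolding eucl_def
  by (subst PL.emeasure_PiM) (auto simp: prod_ennreal ennreal_power)

lemma B1_fin: "emeasure (eucl d) (B1 d) < \<infinity>"
proof -
  have "B1 d \<subseteq> PiE {..<d} (\<lambda>_. {-1..1})"
  proof
    fix z assume z: "z \<in> B1 d"
    have "\<bar>z i\<bar> \<le> 1" if i: "i < d" for i
    proof -
      have "(z i)\<^sup>2 \<le> (\<Sum>k<d. (z k)\<^sup>2)" using i by (intro member_le_sum) auto
      also have "\<dots> < 1" using z by (simp add: B1_def enorm_def)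
      finally show ?thesis by (simp add: abs_square_less_1 less_imp_le)
    qed
    then show "z \<in> PiE {..<d} (\<lambda>_. {-1..1})" using z by (auto simp: B1_def space_eucl PiE_def abs_le_iff)
  qed
  then have "emeasure (eucl d) (B1 d) \<le> emeasure (eucl d) (PiE {..<d} (\<lambda>_. {-1..1}))"
    by (intro emeasure_mono) (auto simp: eucl_def)
  also have "\<dots> < \<infinity>" by (subst cube_meas) auto
  finally show ?thesis .
qed

lemma Bset_B1: "Bset d \<subseteq> B1 d" by (auto simp: Bset_def B1_def)

lemma Bset_pos: assumes d: "1 \<le> d" shows "0 < emeasure (eucl d) (Bset d)"
proof -
  define a where "a = 1 / (4 * real d)"
  have a: "0 < a" using d by (simp add: a_def)
  have "PiE {..<d} (\<lambda>_. {a..2*a}) \<subseteq> Bset d"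
  proof
    fix z assume z: "z \<in> PiE {..<d} (\<lambda>_. {a..2*a})"
    have "(\<Sum>k<d. (z k)\<^sup>2) \<le> (\<Sum>k<d. (2*a)\<^sup>2)"
      using z a by (intro sum_mono power_mono) (auto simp: PiE_def Pi_def)
    also have "\<dots> = real d * (4 * a * a)" by (simp add: power2_eq_square)
    also have "\<dots> = 1 / (4 * real d)" using d by (simp add: a_def)
    also have "\<dots> < 1" using d by simp
    finally have lt: "(\<Sum>k<d. (z k)\<^sup>2) < 1" .
    have "0 < (z 0)\<^sup>2" using z a d by (auto simp: PiE_def Pi_def)
    also have "\<dots> \<le> (\<Sum>k<d. (z k)\<^sup>2)" using d by (intro member_le_sum) auto
    finally have gt: "0 < (\<Sum>k<d. (z k)\<^sup>2)" .
    show "z \<in> Bset d" using z lt gt by (auto simp: Bset_def enorm_def space_eucl PiE_def)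
  qed
  then have "emeasure (eucl d) (PiE {..<d} (\<lambda>_. {a..2*a})) \<le> emeasure (eucl d) (Bset d)"
    by (intro emeasure_mono) auto
  moreover have "emeasure (eucl d) (PiE {..<d} (\<lambda>_. {a..2*a})) = ennreal (a ^ d)"
    using a by (subst cube_meas) auto
  moreover have "0 < ennreal (a ^ d)" using a by simp
  ultimately show ?thesis by order
qed

lemma Bset_fin: "emeasure (eucl d) (Bset d) < \<infinity>"
  using emeasure_mono[OF Bset_B1[of d] B1_sets[of d]] B1_fin[of d] by order

lemma prob_sphere: assumes "1 \<le> d" shows "prob_space (sphere_measure d)"
proof -
  have "prob_space (uniform_measure (eucl d) (Bset d))"
    using Bset_pos[OF assms] Bset_fin[of d] by (intro prob_space_uniform_measure) auto
  then show ?thesis unfolding sphere_eq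
    using proj_measurable by (intro prob_space.prob_space_distr) auto
qed

lemma AE_sphere: "AE x in sphere_measure d. x \<in> usphere d"
proof -
  have "Bset d \<inter> (proj d -` (space (eucl d) - usphere d) \<inter> space (eucl d)) = {}"
    by (auto simp: Bset_def usphere_def enorm_proj proj_space)
  then have "emeasure (sphere_measure d) (space (eucl d) - usphere d) = 0"
    by (subst emeasure_sphere) auto
  then show ?thesis by (intro AE_I[where N="space (eucl d) - usphere d"]) auto
qed



lemma px_sd:
  assumes d: "2 \<le> d" and x: "x \<in> usphere d"
  shows "measure (sphere_measure d) (cap d x \<theta>) = sd d \<theta>"
proof -
  have "emeasure (sphere_measure d) (cap d x \<theta>) = emeasure (sphere_measure d) (cap d (e1 d) \<theta>)"
    unfolding emeasure_cap K_e1[OF d x] ..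
  then show ?thesis unfolding sd_def e1_def measure_def by simp
qed

definition Phi :: "nat \<Rightarrow> nat \<Rightarrow> (nat \<Rightarrow> real) \<Rightarrow> real \<Rightarrow> (nat \<Rightarrow> real) \<Rightarrow> (nat \<Rightarrow> real)" where
  "Phi d k a \<rho> z = restrict (\<lambda>i. if i < k then (z i - a i) / \<rho> else z i) {..<d}"

lemma Phi_measurable: "Phi d k a \<rho> \<in> eucl d \<rightarrow>\<^sub>M eucl d"
  unfolding eucl_def Phi_def
  apply (rule measurable_PiM_single')
  subgoal for i
    using comp_measurable_eucl[of i d]
    unfolding eucl_def by (cases "i < k") (auto intro!: borel_measurable_divide borel_measurable_diff)
  by (auto simp: space_PiM PiE_def extensional_def)

lemma Phi_scale:
  assumes k: "k \<le> d" and \<rho>: "0 < \<rho>" and A: "A \<in> sets (eucl d)"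
  shows "emeasure (eucl d) (Phi d k a \<rho> -` A \<inter> space (eucl d)) = ennreal (\<rho> ^ k) * emeasure (eucl d) A"
  using k
proof (induction k)
  case 0
  have "Phi d 0 a \<rho> -` A \<inter> space (eucl d) = A"
  proof -
    have "\<And>z. z \<in> space (eucl d) \<Longrightarrow> Phi d 0 a \<rho> z = z"
      by (auto simp: Phi_def space_eucl PiE_def extensional_def fun_eq_iff)
    then show ?thesis using sets.sets_into_space[OF A] by auto
  qed
  then show ?case by simp
next
  case (Suc k)
  have kd: "k < d" using Suc.prems by simp
  have PA: "Phi d k a \<rho> -` A \<inter> space (eucl d) \<in> sets (eucl d)"
    using Phi_measurable A by (rule measurable_sets)
  have "emeasure (eucl d) {z \<in> space (eucl d). z(k := (1/\<rho>) * z k + (- a k / \<rho>)) \<in> Phi d k a \<rho> -` A \<inter> space (eucl d)}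
      * ennreal \<bar>1/\<rho>\<bar> = emeasure (eucl d) (Phi d k a \<rho> -` A \<inter> space (eucl d))"
    using kd \<rho> PA by (intro coord_affine) auto
  moreover have "{z \<in> space (eucl d). z(k := (1/\<rho>) * z k + (- a k / \<rho>)) \<in> Phi d k a \<rho> -` A \<inter> space (eucl d)}
      = Phi d (Suc k) a \<rho> -` A \<inter> space (eucl d)"
  proof -
    have "\<And>z. z \<in> space (eucl d) \<Longrightarrow> Phi d k a \<rho> (z(k := (1/\<rho>) * z k + (- a k / \<rho>))) = Phi d (Suc k) a \<rho> z"
      by (auto simp: Phi_def fun_eq_iff diff_divide_distrib less_Suc_eq)
    moreover have "\<And>z. z \<in> space (eucl d) \<Longrightarrow> z(k := (1/\<rho>) * z k + (- a k / \<rho>)) \<in> space (eucl d)"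
      using kd by (intro upd_in_space)
    ultimately show ?thesis by auto
  qed
  ultimately have eq: "emeasure (eucl d) (Phi d (Suc k) a \<rho> -` A \<inter> space (eucl d)) * ennreal (1/\<rho>)
      = ennreal (\<rho> ^ k) * emeasure (eucl d) A"
    using Suc.IH kd \<rho> by simp
  have "emeasure (eucl d) (Phi d (Suc k) a \<rho> -` A \<inter> space (eucl d))
      = emeasure (eucl d) (Phi d (Suc k) a \<rho> -` A \<inter> space (eucl d)) * ennreal (1/\<rho>) * ennreal \<rho>"
    using \<rho> by (simp add: mult.assoc ennreal_mult[symmetric])
  also have "\<dots> = ennreal (\<rho> ^ Suc k) * emeasure (eucl d) A"
    unfolding eq using \<rho> by (simp add: ennreal_mult mult_ac)
  finally show ?case .
qed

lemma l1: fixes x y :: real assumes "x\<^sup>2 < y\<^sup>2" "0 \<le> y" shows "\<bar>x\<bar> < y"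
  using power2_less_imp_less[of "\<bar>x\<bar>" y] assms by simp
lemma l2: fixes c s :: real assumes "0<c" "c<1" "0<s" "c\<^sup>2 + s\<^sup>2 = 1" shows "1 - c \<le> s"
proof -
  have "s\<^sup>2 < 1" using assms by (smt (verit) zero_less_power)
  then have s1: "s < 1" using assms by (smt (verit) one_le_power)
  have "s * s \<le> s * 1" using s1 assms by (intro mult_left_mono) auto
  moreover have "c * c \<le> c * 1" using assms by (intro mult_left_mono) auto
  ultimately show ?thesis using assms(4) by (simp add: power2_eq_square)
qed
lemma l3: fixes c s z0 \<rho> :: real assumes "0<c" "c<1" "0<s" "c\<^sup>2 + s\<^sup>2 = 1" "c * \<rho> \<le> z0 * s" "0 < \<rho>" "0 < z0"
  shows "c\<^sup>2 * (z0\<^sup>2 + \<rho>\<^sup>2) \<le> z0\<^sup>2"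
proof -
  have "(c * \<rho>)\<^sup>2 \<le> (z0 * s)\<^sup>2" using assms by (intro power_mono) auto
  then have "c\<^sup>2 * \<rho>\<^sup>2 \<le> z0\<^sup>2 * s\<^sup>2" by (simp add: power_mult_distrib)
  moreover have "z0\<^sup>2 = z0\<^sup>2 * (c\<^sup>2 + s\<^sup>2)" using assms(4) by simp
  ultimately show ?thesis by (simp add: algebra_simps)
qed
lemma ball_arith:
  fixes c s z0 R \<rho> :: real
  assumes c: "0<c" "c<1" and s: "0<s" and cs: "c\<^sup>2 + s\<^sup>2 = 1" and \<rho>: "\<rho> = (1-c)/4" and R: "0 \<le> R"
    and ball: "(z0 - 1/2)\<^sup>2 + R < \<rho>\<^sup>2"
  shows "0 < z0\<^sup>2 + R" "z0\<^sup>2 + R < 1" "c * sqrt (z0\<^sup>2 + R) \<le> z0"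
proof -
  have \<rho>0: "0 < \<rho>" "\<rho> < 1/4" using c \<rho> by auto
  have "(z0 - 1/2)\<^sup>2 < \<rho>\<^sup>2" using ball R by linarith
  then have ab: "\<bar>z0 - 1/2\<bar> < \<rho>" using l1 \<rho>0 by auto
  then have z0: "1/4 < z0" "z0 < 1/2 + \<rho>" using \<rho>0 by auto
  have "0 < z0\<^sup>2" using z0 by simp
  then show "0 < z0\<^sup>2 + R" using R by linarith
  have "z0\<^sup>2 + R < z0\<^sup>2 + \<rho>\<^sup>2 - (z0 - 1/2)\<^sup>2" using ball by linarith
  also have "\<dots> = z0 - 1/4 + \<rho>\<^sup>2" by (simp add: power2_eq_square algebra_simps)
  also have "\<rho>\<^sup>2 < 1/16" using \<rho>0 power_strict_mono[of \<rho> "1/4" 2] by (simp add: power2_eq_square)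
  finally show "z0\<^sup>2 + R < 1" using z0 \<rho>0 by linarith
  have "1 - c \<le> s" using l2 c s cs by blast
  then have "c * \<rho> \<le> z0 * s"
  proof -
    have "c * \<rho> \<le> 1 * \<rho>" using c \<rho>0 by (intro mult_right_mono) auto
    also have "\<dots> \<le> (1/4) * s" using \<open>1 - c \<le> s\<close> \<rho> by simp
    also have "\<dots> \<le> z0 * s" using z0 s by (intro mult_right_mono) auto
    finally show ?thesis .
  qed
  then have "c\<^sup>2 * (z0\<^sup>2 + \<rho>\<^sup>2) \<le> z0\<^sup>2" using l3 c s cs \<rho>0 z0 by auto
  moreover have "c\<^sup>2 * (z0\<^sup>2 + R) \<le> c\<^sup>2 * (z0\<^sup>2 + \<rho>\<^sup>2)"
  proof -
    have "0 \<le> (z0 - 1/2)\<^sup>2" by simp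
    then have "R \<le> \<rho>\<^sup>2" using ball by linarith
    then show ?thesis by (intro mult_left_mono) auto
  qed
  ultimately have "c\<^sup>2 * (z0\<^sup>2 + R) \<le> z0\<^sup>2" by linarith
  then have "sqrt (c\<^sup>2 * (z0\<^sup>2 + R)) \<le> sqrt (z0\<^sup>2)" by (rule real_sqrt_le_mono)
  then show "c * sqrt (z0\<^sup>2 + R) \<le> z0" using c z0 by (simp add: real_sqrt_mult)
qed

definition rho :: "real \<Rightarrow> real" where "rho \<theta> = (1 - cos \<theta>) / 4"

lemma sd_lower:
  assumes d: "2 \<le> d" and th: "0 < \<theta>" "\<theta> < pi/2"
  shows "rho \<theta> ^ d \<le> sd d \<theta>"
proof -
  define \<rho> where "\<rho> = rho \<theta>"
  define a where "a = (\<lambda>i::nat. if i = 0 then 1/2 else (0::real))"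
  have c0: "0 < cos \<theta>" "cos \<theta> < 1"
  proof -
    show "0 < cos \<theta>" using th by (intro cos_gt_zero) auto
    have "cos \<theta> < cos 0" using th by (intro cos_monotone_0_pi) auto
    then show "cos \<theta> < 1" by simp
  qed
  have s0: "0 < sin \<theta>" using th by (auto intro!: sin_gt_zero)
  have \<rho>0: "0 < \<rho>" using c0 by (simp add: \<rho>_def rho_def)
  define Ball where "Ball = Phi d d a \<rho> -` B1 d \<inter> space (eucl d)"
  have sub: "Ball \<subseteq> Kset d \<theta> (e1 d)"
  proof
    fix z assume z: "z \<in> Ball"
    then have zs: "z \<in> space (eucl d)" and zb: "enorm d (Phi d d a \<rho> z) < 1"
      using Phi_measurable[of d d a \<rho>] by (auto simp: Ball_def B1_def dest: measurable_space)
    define R where "R = (\<Sum>i\<in>{..<d}-{0}. (z i)\<^sup>2)"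
    have R0: "0 \<le> R" unfolding R_def by (intro sum_nonneg) auto
    have d0: "0 \<in> {..<d}" using d by auto
    have "(\<Sum>i<d. (Phi d d a \<rho> z i)\<^sup>2) = (\<Sum>i<d. ((z i - a i) / \<rho>)\<^sup>2)"
      by (intro sum.cong) (auto simp: Phi_def)
    also have "\<dots> = ((z 0 - 1/2) / \<rho>)\<^sup>2 + (\<Sum>i\<in>{..<d}-{0}. ((z i - a i) / \<rho>)\<^sup>2)"
      using d0 by (subst sum.remove[of _ 0]) (auto simp: a_def)
    also have "(\<Sum>i\<in>{..<d}-{0}. ((z i - a i) / \<rho>)\<^sup>2) = R / \<rho>\<^sup>2"
      unfolding R_def by (simp add: sum_divide_distrib power_divide a_def)
    finally have "(\<Sum>i<d. (Phi d d a \<rho> z i)\<^sup>2) = ((z 0 - 1/2)\<^sup>2 + R) / \<rho>\<^sup>2"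
      by (simp add: power_divide add_divide_distrib)
    with zb have "((z 0 - 1/2)\<^sup>2 + R) / \<rho>\<^sup>2 < 1" by (simp add: enorm_def)
    then have ball: "(z 0 - 1/2)\<^sup>2 + R < \<rho>\<^sup>2" using \<rho>0 by (simp add: divide_less_eq)
    have en: "enorm d z = sqrt ((z 0)\<^sup>2 + R)"
      unfolding enorm_def R_def using d0 by (subst sum.remove[of _ 0]) auto
    have ei: "einner d (e1 d) z = z 0"
    proof -
      have "einner d (e1 d) z = e1 d 0 * z 0 + (\<Sum>i\<in>{..<d}-{0}. e1 d i * z i)"
        unfolding einner_def using d0 by (subst sum.remove[of _ 0]) auto
      also have "(\<Sum>i\<in>{..<d}-{0}. e1 d i * z i) = 0" by (intro sum.neutral) (auto simp: e1_def)
      moreover have "e1 d 0 = 1" using d0 by (simp add: e1_def)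
      ultimately show ?thesis by simp
    qed
    have cs: "(cos \<theta>)\<^sup>2 + (sin \<theta>)\<^sup>2 = 1" by simp
    note BA = ball_arith[OF c0 s0 cs \<rho>_def[unfolded rho_def] R0 ball]
    show "z \<in> Kset d \<theta> (e1 d)" using BA zs by (simp add: Kset_def en ei)
  qed
  have Ballm: "Ball \<in> sets (eucl d)" unfolding Ball_def using Phi_measurable B1_sets by (rule measurable_sets)
  have "ennreal (\<rho> ^ d) * emeasure (eucl d) (Bset d) \<le> ennreal (\<rho> ^ d) * emeasure (eucl d) (B1 d)"
    by (intro mult_left_mono emeasure_mono Bset_B1) auto
  also have "\<dots> = emeasure (eucl d) Ball" unfolding Ball_def using \<rho>0 by (intro Phi_scale[symmetric]) auto
  also have "\<dots> \<le> emeasure (eucl d) (Kset d \<theta> (e1 d))" using sub by (intro emeasure_mono) auto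
  finally have le: "ennreal (\<rho> ^ d) * emeasure (eucl d) (Bset d) \<le> emeasure (eucl d) (Kset d \<theta> (e1 d))" .
  have KB: "Kset d \<theta> (e1 d) \<subseteq> Bset d" by (auto simp: Kset_def Bset_def)
  have fB: "emeasure (eucl d) (Bset d) = ennreal (measure (eucl d) (Bset d))"
    using Bset_fin[of d] by (intro emeasure_eq_ennreal_measure) auto
  have fK: "emeasure (eucl d) (Kset d \<theta> (e1 d)) = ennreal (measure (eucl d) (Kset d \<theta> (e1 d)))"
    using Bset_fin[of d] emeasure_mono[OF KB Bset_sets] by (intro emeasure_eq_ennreal_measure) auto
  have mB: "0 < measure (eucl d) (Bset d)" using Bset_pos[of d] d fB by simp
  have le2: "\<rho> ^ d * measure (eucl d) (Bset d) \<le> measure (eucl d) (Kset d \<theta> (e1 d))"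
    using le unfolding fB fK using \<rho>0 by (simp add: ennreal_mult[symmetric] ennreal_le_iff)
  have "sd d \<theta> = enn2real (emeasure (eucl d) (Kset d \<theta> (e1 d)) / emeasure (eucl d) (Bset d))"
    unfolding sd_def measure_def emeasure_cap e1_def ..
  also have "\<dots> = measure (eucl d) (Kset d \<theta> (e1 d)) / measure (eucl d) (Bset d)"
    unfolding fB fK using mB by (simp add: divide_ennreal)
  finally show ?thesis using le2 mB \<rho>0 unfolding \<rho>_def by (simp add: le_divide_eq)
qed



lemma pair_meas: "(\<lambda>p. (if enorm d (snd p) = 1 \<and> cos \<theta> \<le> einner d (fst p) (snd p) then 1 else 0::real))
   \<in> borel_measurable (sphere_measure d \<Otimes>\<^sub>M sphere_measure d)"
proof -
  have h: "(\<lambda>p. (if sqrt (\<Sum>i<d. (snd p i)\<^sup>2) = 1 \<and> cos \<theta> \<le> (\<Sum>i<d. fst p i * snd p i) then 1 else 0::real))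
   \<in> borel_measurable ((\<Pi>\<^sub>M i\<in>{..<d}. lborel) \<Otimes>\<^sub>M (\<Pi>\<^sub>M i\<in>{..<d}. lborel))"
    by measurable
  have S: "sets (sphere_measure d \<Otimes>\<^sub>M sphere_measure d) = sets ((\<Pi>\<^sub>M i\<in>{..<d}. lborel) \<Otimes>\<^sub>M (\<Pi>\<^sub>M i\<in>{..<d}. (lborel::real measure)))"
    by (rule sets_pair_measure_cong) (simp_all only: sets_sphere eucl_def)
  show ?thesis unfolding enorm_def einner_def measurable_cong_sets[OF S refl] by (rule h)
qed

definition ind :: "nat \<Rightarrow> real \<Rightarrow> (nat \<Rightarrow> real) \<Rightarrow> (nat \<Rightarrow> real) \<Rightarrow> real" where
  "ind d \<theta> x y = (if enorm d y = 1 \<and> cos \<theta> \<le> einner d x y then 1 else 0)"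

lemma xs_meas:
  assumes "j \<in> I" "k \<in> I"
  shows "(\<lambda>xs. ind d \<theta> (xs j) (xs k)) \<in> borel_measurable (PiM I (\<lambda>_. sphere_measure d))"
proof -
  have "(\<lambda>xs. (xs j, xs k)) \<in> PiM I (\<lambda>_. sphere_measure d) \<rightarrow>\<^sub>M sphere_measure d \<Otimes>\<^sub>M sphere_measure d"
    apply (rule measurable_Pair)
    apply (rule measurable_component_singleton[OF assms(1)])
    apply (rule measurable_component_singleton[OF assms(2)])
    done
  from measurable_comp[OF this pair_meas[of d \<theta>]] show ?thesis by (simp add: comp_def ind_def)
qed

lemma ind_cap: "y \<in> space (eucl d) \<Longrightarrow> ind d \<theta> x y = indicator (cap d x \<theta>) y"
  by (auto simp: ind_def cap_def usphere_def indicator_def)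

lemma ind_meas1: "(\<lambda>v. ind d \<theta> y v) \<in> borel_measurable (sphere_measure d)"
proof -
  have "(\<lambda>v. indicator (cap d y \<theta>) v :: real) \<in> borel_measurable (sphere_measure d)"
    by (intro borel_measurable_indicator) simp
  then show ?thesis by (rule measurable_cong[THEN iffD1, rotated]) (simp add: ind_cap)
qed

lemma ennexp_meas: "f \<in> borel_measurable N \<Longrightarrow> (\<lambda>x. ennreal (exp (u * f x))) \<in> borel_measurable N"
  by measurable

lemma H_int:
  assumes d: "1 \<le> d" and u: "0 \<le> u"
  shows "(\<integral>\<^sup>+v. ennreal (exp (u * ind d \<theta> y v)) \<partial>sphere_measure d)
       = ennreal (1 + (exp u - 1) * measure (sphere_measure d) (cap d y \<theta>))"
proof -
  interpret M: prob_space "sphere_measure d" using prob_sphere[OF d] .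
  have eu: "0 \<le> exp u - 1" using u by simp
  have "(\<integral>\<^sup>+v. ennreal (exp (u * ind d \<theta> y v)) \<partial>sphere_measure d)
      = (\<integral>\<^sup>+v. 1 + ennreal (exp u - 1) * indicator (cap d y \<theta>) v \<partial>sphere_measure d)"
  proof (intro nn_integral_cong)
    fix v assume v: "v \<in> space (sphere_measure d)"
    have e: "ennreal (exp u) = 1 + ennreal (exp u - 1)"
      using ennreal_plus[of 1 "exp u - 1"] eu by simp
    show "ennreal (exp (u * ind d \<theta> y v)) = 1 + ennreal (exp u - 1) * indicator (cap d y \<theta>) v"
      using v eu e by (auto simp: ind_cap indicator_def ennreal_plus[symmetric] simp del: ennreal_plus)
  qed
  also have "\<dots> = 1 + ennreal (exp u - 1) * emeasure (sphere_measure d) (cap d y \<theta>)"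
  proof -
    have sp1: "emeasure (sphere_measure d) (space (eucl d)) = 1" using M.emeasure_space_1 by simp
    have "(\<integral>\<^sup>+v. 1 + ennreal (exp u - 1) * indicator (cap d y \<theta>) v \<partial>sphere_measure d)
       = (\<integral>\<^sup>+v. 1 \<partial>sphere_measure d) + (\<integral>\<^sup>+v. ennreal (exp u - 1) * indicator (cap d y \<theta>) v \<partial>sphere_measure d)"
      by (rule nn_integral_add) auto
    also have "(\<integral>\<^sup>+v. ennreal (exp u - 1) * indicator (cap d y \<theta>) v \<partial>sphere_measure d)
       = ennreal (exp u - 1) * emeasure (sphere_measure d) (cap d y \<theta>)"
      by (rule nn_integral_cmult_indicator) simp
    finally show ?thesis using sp1 by simp
  qed
  also have "\<dots> = ennreal (1 + (exp u - 1) * measure (sphere_measure d) (cap d y \<theta>))"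
  proof -
    have p: "0 \<le> (exp u - 1) * measure (sphere_measure d) (cap d y \<theta>)" using eu by simp
    show ?thesis
      using eu ennreal_plus[OF zero_le_one p] by (simp add: M.emeasure_eq_measure ennreal_mult)
  qed
  finally show ?thesis .
qed

lemma card_le_ind:
  assumes j: "j \<in> I" and fin: "finite I" and sp: "\<And>k. k \<in> I \<Longrightarrow> xs k \<in> space (eucl d)"
  shows "real (card {k \<in> I. xs k \<in> cap d (xs j) \<theta>}) \<le> 1 + (\<Sum>k\<in>I-{j}. ind d \<theta> (xs j) (xs k))"
proof -
  have "{k \<in> I. xs k \<in> cap d (xs j) \<theta>} \<subseteq> insert j {k \<in> I-{j}. xs k \<in> cap d (xs j) \<theta>}" by auto
  then have "card {k \<in> I. xs k \<in> cap d (xs j) \<theta>} \<le> card (insert j {k \<in> I-{j}. xs k \<in> cap d (xs j) \<theta>})"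
    using fin by (intro card_mono) auto
  also have "\<dots> \<le> Suc (card {k \<in> I-{j}. xs k \<in> cap d (xs j) \<theta>})" by (rule card_insert_le_m1) auto
  finally have c: "real (card {k \<in> I. xs k \<in> cap d (xs j) \<theta>}) \<le> 1 + real (card {k \<in> I-{j}. xs k \<in> cap d (xs j) \<theta>})"
    by linarith
  have "real (card {k \<in> I-{j}. xs k \<in> cap d (xs j) \<theta>}) = (\<Sum>k\<in>I-{j}. if xs k \<in> cap d (xs j) \<theta> then 1 else 0)"
    using fin by (simp add: sum.If_cases Int_def conj_commute)
  also have "\<dots> = (\<Sum>k\<in>I-{j}. ind d \<theta> (xs j) (xs k))"
    using sp by (intro sum.cong) (auto simp: ind_cap indicator_def)
  finally show ?thesis using c by simp
qed

lemma per_n: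
  fixes n :: nat
  assumes d: "2 \<le> d" and u: "0 < u"
  shows "(\<integral>\<^sup>+ xs. of_nat (card {j \<in> {..<n}. t \<le> real (cap_count d \<theta> n xs j)}) \<partial>(\<Pi>\<^sub>M k\<in>{..<n}. sphere_measure d))
     \<le> ennreal (real n * (exp (u * (1 - t)) * (1 + sd d \<theta> * (exp u - 1)) ^ (n - 1)))"
proof -
  define M where "M = sphere_measure d"
  define I where "I = {..<n}"
  define P where "P = (\<Pi>\<^sub>M k\<in>I. M)"
  have d1: "1 \<le> d" using d by simp
  interpret M: prob_space M unfolding M_def using prob_sphere[OF d1] .
  interpret PS: product_sigma_finite "\<lambda>_::nat. M"
    by (simp add: product_sigma_finite_def M.sigma_finite_measure_axioms)
  define C where "C = exp (u * (1 - t))"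
  define a where "a = 1 + sd d \<theta> * (exp u - 1)"
  define G where "G j xs = ennreal C * (\<Prod>k\<in>I-{j}. ennreal (exp (u * ind d \<theta> (xs j) (xs k))))" for j xs
  have finI: "finite I" by (simp add: I_def)
  have Gm: "G j \<in> borel_measurable P" if j: "j \<in> I" for j
    unfolding G_def P_def M_def
    using j by (intro borel_measurable_times_ennreal borel_measurable_const borel_measurable_prod_ennreal
        ennexp_meas xs_meas) auto
  have step1: "of_nat (card {j \<in> I. t \<le> real (cap_count d \<theta> n xs j)}) \<le> (\<Sum>j\<in>I. G j xs)"
    if xs: "xs \<in> space P" for xs
  proof -
    have sp: "\<And>k. k \<in> I \<Longrightarrow> xs k \<in> space (eucl d)"
      using xs by (auto simp: P_def M_def space_PiM)
    have "of_nat (card {j \<in> I. t \<le> real (cap_count d \<theta> n xs j)}) = (\<Sum>j\<in>I. if t \<le> real (cap_count d \<theta> n xs j) then 1 else (0::ennreal))"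
      using finI by (simp add: sum.If_cases Int_def conj_commute)
    also have "\<dots> \<le> (\<Sum>j\<in>I. G j xs)"
    proof (intro sum_mono)
      fix j assume j: "j \<in> I"
      show "(if t \<le> real (cap_count d \<theta> n xs j) then 1 else (0::ennreal)) \<le> G j xs"
      proof (cases "t \<le> real (cap_count d \<theta> n xs j)")
        case True
        have cc: "real (cap_count d \<theta> n xs j) \<le> 1 + (\<Sum>k\<in>I-{j}. ind d \<theta> (xs j) (xs k))"
          unfolding cap_count_def I_def[symmetric] by (rule card_le_ind[OF j finI sp])
        have "0 \<le> u * (1 - t + (\<Sum>k\<in>I-{j}. ind d \<theta> (xs j) (xs k)))"
          using u True cc by (intro mult_nonneg_nonneg) auto
        then have "1 \<le> exp (u * (1 - t + (\<Sum>k\<in>I-{j}. ind d \<theta> (xs j) (xs k))))" by simp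
        also have "\<dots> = C * (\<Prod>k\<in>I-{j}. exp (u * ind d \<theta> (xs j) (xs k)))"
          unfolding C_def using finI by (simp add: distrib_left sum_distrib_left exp_add exp_sum)
        finally have "ennreal 1 \<le> ennreal (C * (\<Prod>k\<in>I-{j}. exp (u * ind d \<theta> (xs j) (xs k))))"
          by (rule ennreal_leI)
        also have "\<dots> = G j xs"
          unfolding G_def C_def by (subst ennreal_mult) (auto intro: prod_nonneg simp: prod_ennreal)
        finally show ?thesis using True by simp
      qed simp
    qed
    finally show ?thesis .
  qed
  have step3: "(\<integral>\<^sup>+xs. G j xs \<partial>P) = ennreal (C * a ^ (n - 1))" if j: "j \<in> I" for j
  proof -
    define J where "J = I - {j}"
    have IJ: "I = insert j J" and jJ: "j \<notin> J" and fJ: "finite J" using j finI by (auto simp: J_def)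
    have cJ: "card J = n - 1" using j by (simp add: J_def I_def)
    have "(\<integral>\<^sup>+xs. G j xs \<partial>P) = (\<integral>\<^sup>+y. (\<integral>\<^sup>+x. G j (x(j := y)) \<partial>(\<Pi>\<^sub>M k\<in>J. M)) \<partial>M)"
      unfolding P_def IJ
      by (rule PS.product_nn_integral_insert_rev[OF fJ jJ]) (use Gm[OF j] in \<open>simp add: P_def IJ\<close>)
    also have "\<dots> = (\<integral>\<^sup>+y. ennreal (C * a ^ (n - 1)) \<partial>M)"
    proof (rule nn_integral_cong_AE)
      have "AE y in M. y \<in> usphere d" unfolding M_def by (rule AE_sphere)
      then show "AE y in M. (\<integral>\<^sup>+x. G j (x(j := y)) \<partial>(\<Pi>\<^sub>M k\<in>J. M)) = ennreal (C * a ^ (n - 1))"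
      proof (rule AE_mp, intro AE_I2 impI)
        fix y assume y: "y \<in> usphere d"
        have "(\<integral>\<^sup>+x. G j (x(j := y)) \<partial>(\<Pi>\<^sub>M k\<in>J. M))
            = (\<integral>\<^sup>+x. ennreal C * (\<Prod>k\<in>J. ennreal (exp (u * ind d \<theta> y (x k)))) \<partial>(\<Pi>\<^sub>M k\<in>J. M))"
        proof (intro nn_integral_cong)
          fix x
          have "(\<Prod>k\<in>J. ennreal (exp (u * ind d \<theta> y ((x(j := y)) k)))) = (\<Prod>k\<in>J. ennreal (exp (u * ind d \<theta> y (x k))))"
            using jJ by (intro prod.cong) auto
          then show "G j (x(j := y)) = ennreal C * (\<Prod>k\<in>J. ennreal (exp (u * ind d \<theta> y (x k))))"
            by (simp add: G_def J_def[symmetric] del: fun_upd_apply) (simp only: fun_upd_same)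
        qed
        also have "\<dots> = ennreal C * (\<integral>\<^sup>+x. (\<Prod>k\<in>J. ennreal (exp (u * ind d \<theta> y (x k)))) \<partial>(\<Pi>\<^sub>M k\<in>J. M))"
        proof (rule nn_integral_cmult)
          show "(\<lambda>x. \<Prod>k\<in>J. ennreal (exp (u * ind d \<theta> y (x k)))) \<in> borel_measurable (\<Pi>\<^sub>M k\<in>J. M)"
          proof (intro borel_measurable_prod_ennreal ennexp_meas)
            fix k assume k: "k \<in> J"
            have im: "(\<lambda>v. ind d \<theta> y v) \<in> borel_measurable M" unfolding M_def by (rule ind_meas1)
            show "(\<lambda>x. ind d \<theta> y (x k)) \<in> borel_measurable (\<Pi>\<^sub>M k\<in>J. M)"
              using measurable_compose[OF measurable_component_singleton[of k J "\<lambda>_. M", OF k] im] .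
          qed
        qed
        also have "(\<integral>\<^sup>+x. (\<Prod>k\<in>J. ennreal (exp (u * ind d \<theta> y (x k)))) \<partial>(\<Pi>\<^sub>M k\<in>J. M))
            = (\<Prod>k\<in>J. (\<integral>\<^sup>+v. ennreal (exp (u * ind d \<theta> y v)) \<partial>M))"
          by (rule PS.product_nn_integral_prod[OF fJ, of "\<lambda>k v. ennreal (exp (u * ind d \<theta> y v))"])
             (rule ennexp_meas[OF ind_meas1[of d \<theta> y, folded M_def]])
        also have "\<dots> = (\<Prod>k\<in>J. ennreal a)"
        proof (intro prod.cong refl)
          fix k
          have "(\<integral>\<^sup>+v. ennreal (exp (u * ind d \<theta> y v)) \<partial>M) = ennreal (1 + (exp u - 1) * measure M (cap d y \<theta>))"
            unfolding M_def using d1 u by (intro H_int) auto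
          also have "measure M (cap d y \<theta>) = sd d \<theta>" unfolding M_def by (rule px_sd[OF d y])
          finally show "(\<integral>\<^sup>+v. ennreal (exp (u * ind d \<theta> y v)) \<partial>M) = ennreal a" by (simp add: a_def algebra_simps)
        qed
        also have "ennreal C * (\<Prod>k\<in>J. ennreal a) = ennreal (C * a ^ (n - 1))"
        proof -
          have a0: "0 \<le> a" unfolding a_def sd_def using u by (simp add: add_nonneg_nonneg)
          have C0: "0 \<le> C" unfolding C_def by simp
          show ?thesis using cJ a0 C0 by (simp add: ennreal_power ennreal_mult)
        qed
        finally show "(\<integral>\<^sup>+x. G j (x(j := y)) \<partial>(\<Pi>\<^sub>M k\<in>J. M)) = ennreal (C * a ^ (n - 1))" .
      qed
    qed
    also have "\<dots> = ennreal (C * a ^ (n - 1))" by (simp add: M.emeasure_space_1)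
    finally show ?thesis .
  qed
  have "(\<integral>\<^sup>+ xs. of_nat (card {j \<in> I. t \<le> real (cap_count d \<theta> n xs j)}) \<partial>P) \<le> (\<integral>\<^sup>+ xs. (\<Sum>j\<in>I. G j xs) \<partial>P)"
    using step1 by (intro nn_integral_mono) auto
  also have "\<dots> = (\<Sum>j\<in>I. (\<integral>\<^sup>+ xs. G j xs \<partial>P))"
    using Gm by (intro nn_integral_sum) auto
  also have "\<dots> = (\<Sum>j\<in>I. ennreal (C * a ^ (n - 1)))" using step3 by simp
  also have "\<dots> = ennreal (real n * (C * a ^ (n - 1)))"
  proof -
    have a0: "0 \<le> a" unfolding a_def sd_def using u by (simp add: add_nonneg_nonneg)
    have C0: "0 \<le> C" unfolding C_def by simp
    show ?thesis using a0 C0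
      by (simp add: I_def ennreal_mult ennreal_of_nat_eq_real_of_nat)
  qed
  finally show ?thesis unfolding P_def I_def M_def C_def a_def .
qed



lemma pois_sum:
  fixes lam a :: real
  shows "(\<lambda>n. lam ^ n / fact n * exp (- lam) * (real n * a ^ (n - 1))) sums (lam * exp (lam * (a - 1)))"
proof -
  have "(\<lambda>m. (lam * a) ^ m /\<^sub>R fact m) sums exp (lam * a)" by (rule exp_converges)
  then have "(\<lambda>m. (lam * exp (- lam)) * ((lam * a) ^ m / fact m)) sums ((lam * exp (- lam)) * exp (lam * a))"
    by (intro sums_mult) (simp add: divide_inverse mult.commute)
  moreover have "(\<lambda>m. (lam * exp (- lam)) * ((lam * a) ^ m / fact m))
      = (\<lambda>m. lam ^ Suc m / fact (Suc m) * exp (- lam) * (real (Suc m) * a ^ (Suc m - 1)))"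
  proof (rule ext)
    fix m
    have "fact (Suc m) = real (Suc m) * fact m" by simp
    then show "(lam * exp (- lam)) * ((lam * a) ^ m / fact m)
      = lam ^ Suc m / fact (Suc m) * exp (- lam) * (real (Suc m) * a ^ (Suc m - 1))"
      by (simp add: power_mult_distrib del: of_nat_Suc fact_Suc)
  qed
  moreover have "(lam * exp (- lam)) * exp (lam * a) = lam * exp (lam * (a - 1))"
    by (simp add: algebra_simps mult_exp_exp)
  ultimately have "(\<lambda>m. lam ^ Suc m / fact (Suc m) * exp (- lam) * (real (Suc m) * a ^ (Suc m - 1)))
      sums (lam * exp (lam * (a - 1)))" by (simp only:)
  then show ?thesis using sums_Suc_iff[of "\<lambda>n. lam ^ n / fact n * exp (- lam) * (real n * a ^ (n - 1))"] by simp
qed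

lemma final_ineq:
  fixes D q u t :: real and d :: nat
  assumes d: "1 \<le> d" and q: "q = D powr (1/3)" and D: "(12 * real d) ^ 3 \<le> D"
    and t: "t = D * (1 + D powr (-1/3))" and u: "u = 1 / (2 * q)"
  shows "exp (u * (1 - t) + D * (exp u - 1)) \<le> 1 / (2 * real d)"
proof -
  have D0: "0 < D" using D d by (smt (verit) of_nat_0_less_iff zero_less_power mult_pos_pos gr0I not_one_le_zero)
  have q3: "q ^ 3 = D" using D0 unfolding q by (simp add: powr_realpow[symmetric] powr_powr)
  have q0: "0 < q" using D0 q by simp
  have "(12 * real d) powr 3 \<le> D" using D d by (simp add: powr_realpow)
  then have "((12 * real d) powr 3) powr (1/3) \<le> D powr (1/3)" by (intro powr_mono2) auto
  moreover have "((12 * real d) powr 3) powr (1/3) = 12 * real d" by (subst powr_powr) simp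
  ultimately have q12: "12 * real d \<le> q" unfolding q by simp
  have Dm: "D powr (-1/3) = 1 / q" unfolding q using D0 by (simp add: powr_minus_divide)
  have "t = D * (1 + 1 / q)" unfolding t Dm ..
  also have "\<dots> = q^3 + q^2" unfolding q3[symmetric] using q0 by (simp add: field_simps power2_eq_square power3_eq_cube)
  finally have tq: "t = q^3 + q^2" .
  have u0: "0 \<le> u" "u \<le> 1" using q0 q12 d unfolding u by auto
  have "exp u \<le> 1 + u + u^2" using exp_bound[OF u0] .
  then have "D * (exp u - 1) \<le> D * (u + u^2)" using D0 by (intro mult_left_mono) auto
  then have "u * (1 - t) + D * (exp u - 1) \<le> u * (1 - t) + D * (u + u^2)" by simp
  also have "\<dots> = 1 / (2 * q) - q / 4"
    unfolding tq q3[symmetric] u using q0 by (simp add: field_simps power2_eq_square power3_eq_cube)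
  also have "\<dots> \<le> 1 - 3 * real d" using q0 q12 d
  proof -
    have "1 / (2 * q) \<le> 1" using q12 d q0 by (simp add: field_simps)
    then show ?thesis using q12 by linarith
  qed
  finally have E: "u * (1 - t) + D * (exp u - 1) \<le> 1 - 3 * real d" .
  have "2 * real d \<le> exp (3 * real d - 1)"
    using exp_ge_add_one_self[of "3 * real d - 1"] d by linarith
  then have "exp (1 - 3 * real d) \<le> 1 / (2 * real d)" using d
    by (simp add: exp_diff field_simps exp_minus)
  then show ?thesis using E by (meson exp_le_cancel_iff order_trans)
qed

lemma asym1: "filterlim (\<lambda>d::nat. sqrt (real d) / ln (real d)) at_top at_top" by real_asymp
lemma asym2: "eventually (\<lambda>d::nat. (12 * real d) ^ 3 \<le> 2 ^ d) at_top" by real_asymp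



lemma ppp_rhs:
  assumes d: "1 \<le> d" and that: "0 \<le> lam"
  shows "ppp_expect d lam (\<lambda>n xs. of_nat n) = ennreal lam"
proof -
  have ps: "prob_space (\<Pi>\<^sub>M k\<in>{..<n}. sphere_measure d)" for n
    by (rule prob_space_PiM) (rule prob_sphere[OF d])
  have "ppp_expect d lam (\<lambda>n xs. of_nat n) = (\<Sum>n. ennreal (lam ^ n / fact n * exp (- lam) * (real n * 1 ^ (n - 1))))"
    unfolding ppp_expect_def
  proof (intro suminf_cong)
    fix n
    have "(\<integral>\<^sup>+ xs. of_nat n \<partial>(\<Pi>\<^sub>M k\<in>{..<n}. sphere_measure d)) = of_nat n"
      using prob_space.emeasure_space_1[OF ps[of n]] by simp
    moreover have "ennreal (lam ^ n / fact n * exp (- lam)) * of_nat n = ennreal (lam ^ n / fact n * exp (- lam) * (real n * 1 ^ (n - 1)))"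
      using that by (subst ennreal_mult') (auto simp: ennreal_of_nat_eq_real_of_nat)
    ultimately show "ennreal (lam ^ n / fact n * exp (- lam)) * (\<integral>\<^sup>+ xs. of_nat n \<partial>(\<Pi>\<^sub>M k\<in>{..<n}. sphere_measure d))
        = ennreal (lam ^ n / fact n * exp (- lam) * (real n * 1 ^ (n - 1)))"
      by simp
  qed
  also have "\<dots> = ennreal (\<Sum>n. lam ^ n / fact n * exp (- lam) * (real n * 1 ^ (n - 1)))"
    using pois_sum[of lam 1] that by (intro suminf_ennreal2) (auto simp: sums_iff)
  also have "(\<Sum>n. lam ^ n / fact n * exp (- lam) * (real n * 1 ^ (n - 1))) = lam"
    using pois_sum[of lam 1] by (simp add: sums_iff)
  finally show ?thesis .
qed

lemma ppp_lhs:
  assumes d: "2 \<le> d" and u: "0 < u" and lam: "0 \<le> lam"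
  shows "ppp_expect d lam (\<lambda>n xs. of_nat (card {j \<in> {..<n}. t \<le> real (cap_count d \<theta> n xs j)}))
     \<le> ennreal (exp (u * (1 - t)) * (lam * exp (lam * ((1 + sd d \<theta> * (exp u - 1)) - 1))))"
proof -
  define C where "C = exp (u * (1 - t))"
  define a where "a = 1 + sd d \<theta> * (exp u - 1)"
  have a0: "0 \<le> a" unfolding a_def sd_def using u by (simp add: add_nonneg_nonneg)
  define g where "g n = C * (lam ^ n / fact n * exp (- lam) * (real n * a ^ (n - 1)))" for n
  have g0: "0 \<le> g n" for n unfolding g_def C_def using lam a0 by simp
  have gs: "g sums (C * (lam * exp (lam * (a - 1))))" unfolding g_def by (intro sums_mult pois_sum)
  have "ppp_expect d lam (\<lambda>n xs. of_nat (card {j \<in> {..<n}. t \<le> real (cap_count d \<theta> n xs j)}))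
      \<le> (\<Sum>n. ennreal (g n))"
    unfolding ppp_expect_def
  proof (intro suminf_le summableI)
    fix n
    have "ennreal (lam ^ n / fact n * exp (- lam)) * (\<integral>\<^sup>+ xs. of_nat (card {j \<in> {..<n}. t \<le> real (cap_count d \<theta> n xs j)}) \<partial>(\<Pi>\<^sub>M k\<in>{..<n}. sphere_measure d))
       \<le> ennreal (lam ^ n / fact n * exp (- lam)) * ennreal (real n * (C * a ^ (n - 1)))"
      unfolding C_def a_def by (intro mult_left_mono per_n[OF d u]) auto
    also have "\<dots> = ennreal (g n)"
      unfolding g_def using lam a0 by (simp add: ennreal_mult[symmetric] C_def mult_ac)
    finally show "ennreal (lam ^ n / fact n * exp (- lam)) * (\<integral>\<^sup>+ xs. of_nat (card {j \<in> {..<n}. t \<le> real (cap_count d \<theta> n xs j)}) \<partial>(\<Pi>\<^sub>M k\<in>{..<n}. sphere_measure d))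
       \<le> ennreal (g n)" .
  qed
  also have "\<dots> = ennreal (C * (lam * exp (lam * (a - 1))))"
    using gs g0 by (subst suminf_ennreal2) (auto simp: sums_iff)
  finally show ?thesis unfolding C_def a_def .
qed



theorem lemmaA3:
  fixes \<theta> :: real
  assumes "0 < \<theta>" and "\<theta> < pi / 2"
  shows "\<exists>d0::nat. \<forall>d\<ge>d0.
    (let lam = (sqrt (real d) / (2 * ln (real d))) ^ d;
         \<Delta> = sd d \<theta> * lam
     in ppp_expect d lam
          (\<lambda>n xs. of_nat (card {j \<in> {..<n}.
                     real (cap_count d \<theta> n xs j) \<ge> \<Delta> * (1 + \<Delta> powr (-1/3))}))
        \<le> ennreal (1 / (2 * real d)) * ppp_expect d lam (\<lambda>n xs. of_nat n))"
proof -
  define \<rho> where "\<rho> = rho \<theta>"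
  have \<rho>0: "0 < \<rho>"
  proof -
    have "cos \<theta> < cos 0" using assms by (intro cos_monotone_0_pi) auto
    then show ?thesis by (simp add: \<rho>_def rho_def)
  qed
  have ev1: "eventually (\<lambda>d::nat. 4 / \<rho> \<le> sqrt (real d) / ln (real d)) at_top"
    using asym1 unfolding filterlim_at_top by blast
  have ev: "eventually (\<lambda>d::nat. 2 \<le> d \<and> 4 / \<rho> \<le> sqrt (real d) / ln (real d) \<and> (12 * real d) ^ 3 \<le> 2 ^ d) at_top"
    using ev1 asym2 eventually_ge_at_top[of "2::nat"] by eventually_elim auto
  then obtain d0 where d0: "\<And>d. d \<ge> d0 \<Longrightarrow> 2 \<le> d \<and> 4 / \<rho> \<le> sqrt (real d) / ln (real d) \<and> (12 * real d) ^ 3 \<le> 2 ^ d"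
    unfolding eventually_at_top_linorder by blast
  show ?thesis
  proof (intro exI[of _ d0] allI impI)
    fix d :: nat assume "d0 \<le> d"
    then have d2: "2 \<le> d" and h1: "4 / \<rho> \<le> sqrt (real d) / ln (real d)" and h2: "(12 * real d) ^ 3 \<le> 2 ^ d"
      using d0 by auto
    define lam where "lam = (sqrt (real d) / (2 * ln (real d))) ^ d"
    define D where "D = sd d \<theta> * lam"
    have ln0: "0 < ln (real d)" using d2 by simp
    have lam0: "0 < lam" unfolding lam_def using ln0 d2 by simp
    have "4 \<le> \<rho> * (sqrt (real d) / ln (real d))" using h1 \<rho>0 by (simp add: field_simps)
    then have "2 \<le> \<rho> * (sqrt (real d) / (2 * ln (real d)))" by simp
    then have "2 ^ d \<le> (\<rho> * (sqrt (real d) / (2 * ln (real d)))) ^ d" by (intro power_mono) auto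
    also have "\<dots> = \<rho> ^ d * lam" unfolding lam_def by (rule power_mult_distrib)
    also have "\<dots> \<le> D" unfolding D_def \<rho>_def using sd_lower[OF d2 assms] lam0
      by (intro mult_right_mono) auto
    finally have D2: "2 ^ d \<le> D" .
    have DD: "(12 * real d) ^ 3 \<le> D" using h2 D2 by linarith
    have D0: "0 < D" using D2 by (smt (verit) zero_less_power)
    define q where "q = D powr (1/3)"
    define u where "u = 1 / (2 * q)"
    define t where "t = D * (1 + D powr (-1/3))"
    have u0: "0 < u" unfolding u_def q_def using D0 by simp
    have "ppp_expect d lam (\<lambda>n xs. of_nat (card {j \<in> {..<n}. t \<le> real (cap_count d \<theta> n xs j)}))
      \<le> ennreal (exp (u * (1 - t)) * (lam * exp (lam * ((1 + sd d \<theta> * (exp u - 1)) - 1))))"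
      using ppp_lhs[OF d2 u0] lam0 by simp
    also have "exp (u * (1 - t)) * (lam * exp (lam * ((1 + sd d \<theta> * (exp u - 1)) - 1)))
        = lam * exp (u * (1 - t) + D * (exp u - 1))"
    proof -
      have "u * (1 - t) + D * (exp u - 1) = u * (1 - t) + lam * ((1 + sd d \<theta> * (exp u - 1)) - 1)"
        unfolding D_def by (simp add: algebra_simps)
      moreover have e: "exp X * (lam * exp Y) = lam * exp (X + Y)" for X Y by (simp add: exp_add mult_ac)
      ultimately show ?thesis by (simp only:)
    qed
    also have "\<dots> \<le> lam * (1 / (2 * real d))"
      using final_ineq[of d q D t u] d2 DD lam0 unfolding q_def t_def u_def
      by (intro mult_left_mono) auto
    finally have L: "ppp_expect d lam (\<lambda>n xs. of_nat (card {j \<in> {..<n}. t \<le> real (cap_count d \<theta> n xs j)}))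
      \<le> ennreal (lam * (1 / (2 * real d)))" by (simp add: ennreal_leI)
    have R: "ennreal (1 / (2 * real d)) * ppp_expect d lam (\<lambda>n xs. of_nat n) = ennreal (lam * (1 / (2 * real d)))"
      using ppp_rhs[of d lam] d2 lam0 by (simp add: ennreal_mult[symmetric] mult.commute)
    show "(let lam = (sqrt (real d) / (2 * ln (real d))) ^ d;
         \<Delta> = sd d \<theta> * lam
     in ppp_expect d lam
          (\<lambda>n xs. of_nat (card {j \<in> {..<n}.
                     real (cap_count d \<theta> n xs j) \<ge> \<Delta> * (1 + \<Delta> powr (-1/3))}))
        \<le> ennreal (1 / (2 * real d)) * ppp_expect d lam (\<lambda>n xs. of_nat n))"
      unfolding Let_def lam_def[symmetric] D_def[symmetric] t_def[symmetric] R using L .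
  qed
qed

end
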